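(* Let $\mathtt{W}_1,\mathtt{W}_2,\mathtt{W}\in\mathcal{U}^{\ast,\circ}$ be words. Then for every marked partition $\widehat{p}\in\mathcal{MP}_{\mathtt{W}}$ (i.e., every marked partition of type $\mathtt{W}$) we have \[ m_{\mathtt{W}_1,\mathtt{W}_2;\widehat{p}} = m_{\mathtt{W}_1,\mathtt{W}_2;\mathtt{W}}, \] where $m_{\mathtt{W}_1,\mathtt{W}_2;\widehat{p}} := \#\{(\widehat{p_1},\widehat{p_2})\in\mathcal{MP}_{\mathtt{W}_1}\times\mathcal{MP}_{\mathtt{W}_2} \mid \Phi(\widehat{p_1},\widehat{p_2})=\widehat{p}\}$ and $m_{\mathtt{W}_1,\mathtt{W}_2;\mathtt{W}}$ is the coefficient of $\mathtt{W}$ in $\mathtt{W}_1\ast\mathtt{W}_2$. In particular, for fixed $\mathtt{W}_1,\mathtt{W}_2$, the number $m_{\mathtt{W}_1,\mathtt{W}_2;\widehat{p}}$ depends only on the type $\mathtt{W}$ of $\widehat{p}$.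
   Context: Let $\mathcal{U}=\{u_j\mid j\in\mathbb{Z}_{\geq0}\}$ be an alphabet; $\mathcal{U}^\ast$ is the set of words (finite concatenations of letters, including the empty word $\mathbf{1}$), and $\mathbb{Q}\langle\mathcal{U}\rangle$ is the $\mathbb{Q}$-vector space with basis $\mathcal{U}^\ast$. The stuffle product $\ast$ on $\mathbb{Q}\langle\mathcal{U}\rangle$ is the $\mathbb{Q}$-bilinear product with $\mathbf{1}\ast\mathtt{W}=\mathtt{W}\ast\mathbf{1}=\mathtt{W}$ and, for $j_1,j_2\in\mathbb{Z}_{\ge0}$ and words $\mathtt{W}_1,\mathtt{W}_2$, $u_{j_1}\mathtt{W}_1\ast u_{j_2}\mathtt{W}_2 = u_{j_1}(\mathtt{W}_1\ast u_{j_2}\mathtt{W}_2)+u_{j_2}(u_{j_1}\mathtt{W}_1\ast\mathtt{W}_2)+u_{j_1+j_2}(\mathtt{W}_1\ast\mathtt{W}_2)$. Let $\mathcal{U}^{\ast,\circ}$ be the set of words not starting with $u_0$ (including $\mathbf{1}$); the span of $\mathcal{U}^{\ast,\circ}$ is closed under $\ast$. For $\mathtt{W}_1,\mathtt{W}_2\in\mathcal{U}^{\ast,\circ}$ write $\mathtt{W}_1\ast\mathtt{W}_2=\sum_{\mathtt{W}\in\mathcal{U}^{\ast,\circ}} m_{\mathtt{W}_1,\mathtt{W}_2;\mathtt{W}}\mathtt{W}$ with $m_{\mathtt{W}_1,\mathtt{W}_2;\mathtt{W}}\in\mathbb{Z}_{\ge0}$. Marked partitions: let $p$ be a partition with distinct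 parts $m_1>\dots>m_d>0$ having multiplicities $n_1,\dots,n_d\in\mathbb{Z}_{>0}$, drawn as a Young diagram (rows top to bottom of weakly decreasing length). A distinct row marking of type $(k_1,\dots,k_d)$ marks, for each $j$, exactly $k_j$ of the $n_j$ rows of length $m_j$, always including the lowest row of length $m_j$. A distinct column marking of type $(z_1,\dots,z_d)$ is a distinct row marking of type $(z_d,\dots,z_1)$ of the conjugate partition; concretely, setting $m_{d+1}=0$, for each $j$ exactly $z_j$ of the columns $m_{j+1}+1,\dots,m_j$ (counted from the left) are marked, always including column $m_j$. A marked partition $\widehat{p}$ is a Young diagram together with a distinct row marking of type $(k_1,\dots,k_d)$ and a distinct column marking of type $(z_1,\dots,z_d)$; its type is the word $u_{k_1}u_0^{z_1-1}\cdots u_{k_d}u_0^{z_d-1}\in\mathcal{U}^{\ast,\circ}$. The empty partition $\emptyset$ is the unique marked partition of type $\mathbf{1}$. $\mathcal{MP}_{\mathtt{W}}$ denotes the set of marked partitions of type $\mathtt{W}$, and $\mathcal{MP}$ the set of all marked partitions. A horizontal block of a (marked) partition is the set of all rows of a given length $m_j$ (obtained by cutting the diagram horizontally below each row containing a corner). The map $\Phi\colon\mathcal{MP}\times\mathcal{MP}\to\mathcal{MP}$: $\Phi(\emptyset,\widehat{p_2})=\widehat{p_2}$, $\Phi(\widehat{p_1},\emptyset)=\widehat{p_1}$; otherwise, cut $\widehat{p_1}$ and $\widehat{p_2}$ into their horizontal blocks and assemble all these blocks into one Young diagram sorted by decreasing length, where if $\widehat{p_1}$ and $\widehat{p_2}$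 both have a block of the same length, the block from $\widehat{p_1}$ is placed directly above the block from $\widehat{p_2}$; the row markings are carried along with the rows; and the $j$-th leftmost column of the result is marked if and only if the $j$-th leftmost column of $\widehat{p_1}$ or of $\widehat{p_2}$ is marked. *)

theory Defs
  imports "HOL-Library.Multiset"
begin

text \<open>Words over the alphabet u_0, u_1, ...: the letter u_j is encoded by the natural number j,
a word is a list of naturals, the empty word is the empty list.\<close>

type_synonym word = "nat list"

definition circ_word :: "word \<Rightarrow> bool" where
  "circ_word w \<longleftrightarrow> (w = [] \<or> hd w \<noteq> 0)"

text \<open>Stuffle product; the result is the multiset of words (with multiplicities = coefficients).\<close>
fun stuffle :: "word \<Rightarrow> word \<Rightarrow> word multiset" where
  "stuffle [] w = {#w#}"
| "stuffle v [] = {#v#}"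
| "stuffle (a # v) (b # w) =
     image_mset ((#) a) (stuffle v (b # w))
   + image_mset ((#) b) (stuffle (a # v) w)
   + image_mset ((#) (a + b)) (stuffle v w)"

definition stuffle_coeff :: "word \<Rightarrow> word \<Rightarrow> word \<Rightarrow> nat" where
  "stuffle_coeff w1 w2 w = count (stuffle w1 w2) w"

text \<open>A marked partition is represented by the list of its rows from top to bottom,
each row given by its length and whether it is row-marked, together with the set of
marked columns (columns numbered 1, 2, ... from the left).\<close>

type_synonym mpart = "(nat \<times> bool) list \<times> nat set"

definition is_mp :: "mpart \<Rightarrow> bool" where
  "is_mp p \<longleftrightarrow> (let rows = fst p; cols = snd p in
      (\<forall>r \<in> set rows. fst r > 0)
    \<and> sorted_wrt (\<ge>) (map fst rows)
    \<and> (\<forall>i < length rows. (Suc i = length rows \<or> fst (rows ! Suc i) < fst (rows ! i))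
                          \<longrightarrow> snd (rows ! i))
    \<and> (\<forall>r \<in> set rows. fst r \<in> cols)
    \<and> (\<forall>c \<in> cols. 1 \<le> c \<and> (\<exists>r \<in> set rows. c \<le> fst r)))"

text \<open>The type of a marked partition: with distinct part lengths m_1 > ... > m_d,
k_j the number of marked rows of length m_j, and z_j the number of marked columns
among m_{j+1}+1, ..., m_j (m_{d+1} = 0), the type is u_{k_1} u_0^{z_1-1} ... u_{k_d} u_0^{z_d-1}.\<close>
definition mp_type :: "mpart \<Rightarrow> word" where
  "mp_type p = (let rows = fst p; cols = snd p;
      ms = remdups (map fst rows);
      nxt = (\<lambda>j. if Suc j < length ms then ms ! Suc j else 0);
      k = (\<lambda>j. length (filter (\<lambda>r. fst r = ms ! j \<and> snd r) rows));
      z = (\<lambda>j. card {c \<in> cols. nxt j < c \<and> c \<le> ms ! j})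
    in concat (map (\<lambda>j. k j # replicate (z j - 1) 0) [0..<length ms]))"

definition MP :: "word \<Rightarrow> mpart set" where
  "MP w = {p. is_mp p \<and> mp_type p = w}"

text \<open>Merging rows sorted by decreasing length; on equal lengths the rows of the first
argument come first (so blocks of the first partition sit above those of the second).\<close>
fun merge_rows :: "(nat \<times> bool) list \<Rightarrow> (nat \<times> bool) list \<Rightarrow> (nat \<times> bool) list" where
  "merge_rows [] ys = ys"
| "merge_rows xs [] = xs"
| "merge_rows (x # xs) (y # ys) =
     (if fst x < fst y then y # merge_rows (x # xs) ys else x # merge_rows xs (y # ys))"

definition Phi :: "mpart \<Rightarrow> mpart \<Rightarrow> mpart" where
  "Phi p1 p2 = (if fst p1 = [] then p2 else if fst p2 = [] then p1
               else (merge_rows (fst p1) (fst p2), snd p1 \<union> snd p2))"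

definition mp_coeff :: "word \<Rightarrow> word \<Rightarrow> mpart \<Rightarrow> nat" where
  "mp_coeff w1 w2 p = card {(p1, p2). p1 \<in> MP w1 \<and> p2 \<in> MP w2 \<and> Phi p1 p2 = p}"

end

theory Submission
  imports Defs
begin


type_synonym ev = "nat \<times> bool list"

definition okb :: "bool list \<Rightarrow> bool" where "okb bl \<longleftrightarrow> bl = [] \<or> last bl"
definition cnt :: "bool list \<Rightarrow> nat" where "cnt bl = length (filter id bl)"
definition validE :: "ev list \<Rightarrow> bool" where
  "validE e \<longleftrightarrow> sorted_wrt (>) (map fst e) \<and> (\<forall>x\<in>set e. 1 \<le> fst x \<and> okb (snd x))"
definition letters :: "ev list \<Rightarrow> word" where "letters e = map (\<lambda>x. cnt (snd x)) e"

fun mergeE :: "ev list \<Rightarrow> ev list \<Rightarrow> ev list" where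
  "mergeE [] ys = ys"
| "mergeE xs [] = xs"
| "mergeE ((c1,b1)#xs) ((c2,b2)#ys) =
    (if c2 < c1 then (c1,b1) # mergeE xs ((c2,b2)#ys)
     else if c1 < c2 then (c2,b2) # mergeE ((c1,b1)#xs) ys
     else (c1, b1 @ b2) # mergeE xs ys)"

lemma validE_Nil[simp]: "validE []" by (simp add: validE_def)
lemma validE_Cons[simp]: "validE ((c,bl)#x) \<longleftrightarrow> (\<forall>c'\<in>fst ` set x. c' < c) \<and> 1 \<le> c \<and> okb bl \<and> validE x"
  by (auto simp: validE_def)
lemma letters_Nil[simp]: "letters [] = []" by (simp add: letters_def)
lemma letters_Cons[simp]: "letters ((c,bl)#x) = cnt bl # letters x" by (simp add: letters_def)
lemma letters_eq_Nil[simp]: "letters e = [] \<longleftrightarrow> e = []" by (simp add: letters_def)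

lemma mergeE_Nil2[simp]: "mergeE xs [] = xs" by (cases xs) auto

lemma mergeE_cols: "fst ` set (mergeE a b) = fst ` set a \<union> fst ` set b"
  by (induction a b rule: mergeE.induct) auto

lemma mergeE_eq_Nil[simp]: "mergeE a b = [] \<longleftrightarrow> a = [] \<and> b = []"
  by (induction a b rule: mergeE.induct) auto

lemma mergeE_sub: "fst ` set x \<subseteq> fst ` set (mergeE x y)" "fst ` set y \<subseteq> fst ` set (mergeE x y)"
  by (simp_all add: mergeE_cols)

lemma okb_append: "okb a \<Longrightarrow> okb b \<Longrightarrow> okb (a @ b)" by (auto simp: okb_def last_append)

lemma mergeE_valid: "validE a \<Longrightarrow> validE b \<Longrightarrow> validE (mergeE a b)"
proof (induction a b rule: mergeE.induct)
  case (3 c1 b1 xs c2 b2 ys)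
  have v1: "validE xs" "okb b1" "1 \<le> c1" "\<forall>c'\<in>fst ` set xs. c' < c1" using "3.prems" by auto
  have v2: "validE ys" "okb b2" "1 \<le> c2" "\<forall>c'\<in>fst ` set ys. c' < c2" using "3.prems" by auto
  consider "c2 < c1" | "c1 < c2" | "c1 = c2" by linarith
  then show ?case
  proof cases
    case 1
    have "validE (mergeE xs ((c2,b2)#ys))" using "3.IH"(1) 1 v1 "3.prems" by simp
    moreover have "\<forall>c'\<in>fst ` set (mergeE xs ((c2,b2)#ys)). c' < c1"
      unfolding mergeE_cols using v1 v2 1 by auto
    ultimately show ?thesis using 1 v1 by simp
  next
    case 2
    have "validE (mergeE ((c1,b1)#xs) ys)" using "3.IH"(2) 2 v2 "3.prems" by simp
    moreover have "\<forall>c'\<in>fst ` set (mergeE ((c1,b1)#xs) ys). c' < c2"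
      unfolding mergeE_cols using v1 v2 2 by auto
    ultimately show ?thesis using 2 v2 by simp
  next
    case 3
    have "validE (mergeE xs ys)" using "3.IH"(3) 3 v1 v2 by simp
    moreover have "\<forall>c'\<in>fst ` set (mergeE xs ys). c' < c1"
      unfolding mergeE_cols using v1 v2 3 by auto
    ultimately show ?thesis using 3 v1 v2 by (simp add: okb_append)
  qed
qed auto

definition T :: "word \<Rightarrow> word \<Rightarrow> ev list \<Rightarrow> (ev list \<times> ev list) set" where
  "T W1 W2 e = {(e1,e2). validE e1 \<and> validE e2 \<and> letters e1 = W1 \<and> letters e2 = W2 \<and> mergeE e1 e2 = e}"

definition SP :: "bool list \<Rightarrow> nat \<Rightarrow> nat \<Rightarrow> (bool list \<times> bool list) set" where
  "SP bl a b = {(b1,b2). b1 @ b2 = bl \<and> okb b1 \<and> okb b2 \<and> cnt b1 = a \<and> cnt b2 = b}"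



lemma T_mem: "(e1,e2) \<in> T W1 W2 e \<longleftrightarrow> validE e1 \<and> validE e2 \<and> letters e1 = W1 \<and> letters e2 = W2 \<and> mergeE e1 e2 = e"
  by (simp add: T_def)
lemma t6: "(e1,e2) \<in> T [] W2 e \<longleftrightarrow> (validE e \<and> letters e = W2 \<and> e1 = [] \<and> e2 = e)"
  unfolding T_mem by auto
lemma pair_set_eqI: "(\<And>a b. (a,b) \<in> A \<longleftrightarrow> (a,b) \<in> B) \<Longrightarrow> A = B" by auto

lemma T_Nil1: "T [] W2 e = (if validE e \<and> letters e = W2 then {([],e)} else {})"
  by (rule pair_set_eqI, cases "validE e \<and> letters e = W2") (simp_all only: t6 if_True if_False, auto)

lemma t8: "(e1,e2) \<in> T W1 [] e \<longleftrightarrow> (validE e \<and> letters e = W1 \<and> e2 = [] \<and> e1 = e)"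
  unfolding T_mem by auto
lemma T_Nil2: "T W1 [] e = (if validE e \<and> letters e = W1 then {(e,[])} else {})"
  by (rule pair_set_eqI, cases "validE e \<and> letters e = W1") (simp_all only: t8 if_True if_False, auto)
lemma t9: "(e1,e2) \<in> T W1 W2 [] \<longleftrightarrow> (W1 = [] \<and> W2 = [] \<and> e1 = [] \<and> e2 = [])"
  unfolding T_mem by auto
lemma T_Nil3: "T W1 W2 [] = (if W1 = [] \<and> W2 = [] then {([],[])} else {})"
  by (rule pair_set_eqI, cases "W1 = [] \<and> W2 = []") (simp_all only: t9 if_True if_False, auto)
lemma T_Cons:
  assumes v: "validE ((c,bl)#e')"
  shows "T (a#v) (b#w) ((c,bl)#e') =
     (if a = cnt bl then (\<lambda>(x,y). ((c,bl)#x, y)) ` T v (b#w) e' else {})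
   \<union> (if b = cnt bl then (\<lambda>(x,y). (x, (c,bl)#y)) ` T (a#v) w e' else {})
   \<union> (\<lambda>((x,y),(b1,b2)). ((c,b1)#x, (c,b2)#y)) ` (T v w e' \<times> SP bl a b)"
  (is "?L = ?A \<union> ?B \<union> ?C")
proof
  show "?L \<subseteq> ?A \<union> ?B \<union> ?C"
  proof
    fix p assume p: "p \<in> ?L"
    then obtain e1 e2 where pe: "p = (e1,e2)" and v1: "validE e1" and v2: "validE e2"
      and l1: "letters e1 = a#v" and l2: "letters e2 = b#w" and m: "mergeE e1 e2 = (c,bl)#e'"
      by (auto simp: T_def)
    obtain c1 bl1 x where e1: "e1 = (c1,bl1)#x" using l1 by (cases e1) auto
    obtain c2 bl2 y where e2: "e2 = (c2,bl2)#y" using l2 by (cases e2) auto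
    consider "c2 < c1" | "c1 < c2" | "c1 = c2" by linarith
    then show "p \<in> ?A \<union> ?B \<union> ?C"
    proof cases
      case 1
      then have "c1 = c" "bl1 = bl" "mergeE x e2 = e'" using m e1 e2 by auto
      then have "(x,e2) \<in> T v (b#w) e'" "a = cnt bl" using v1 v2 l1 l2 e1 by (auto simp: T_def)
      then have "((c,bl)#x, e2) \<in> (\<lambda>(x,y). ((c,bl)#x, y)) ` T v (b#w) e'" by (intro image_eqI[where x="(x,e2)"]) simp_all
      then show ?thesis using pe e1 \<open>c1 = c\<close> \<open>bl1 = bl\<close> \<open>a = cnt bl\<close> by simp
    next
      case 2
      then have "c2 = c" "bl2 = bl" "mergeE e1 y = e'" using m e1 e2 by auto
      then have "(e1,y) \<in> T (a#v) w e'" "b = cnt bl" using v1 v2 l1 l2 e2 by (auto simp: T_def)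
      then have "(e1, (c,bl)#y) \<in> (\<lambda>(x,y). (x, (c,bl)#y)) ` T (a#v) w e'" by (intro image_eqI[where x="(e1,y)"]) simp_all
      then show ?thesis using pe e2 \<open>c2 = c\<close> \<open>bl2 = bl\<close> \<open>b = cnt bl\<close> by simp
    next
      case 3
      then have "c1 = c" "bl1 @ bl2 = bl" "mergeE x y = e'" using m e1 e2 by auto
      then have "(x,y) \<in> T v w e'" "(bl1,bl2) \<in> SP bl a b" using v1 v2 l1 l2 e1 e2 3
        by (auto simp: T_def SP_def)
      then have "((c,bl1)#x, (c,bl2)#y) \<in> ?C" by (intro image_eqI[where x="((x,y),(bl1,bl2))"]) simp_all
      then show ?thesis using pe e1 e2 \<open>c1 = c\<close> 3 by simp
    qed
  qed
next
  have vc: "1 \<le> c" "okb bl" "validE e'" "\<forall>c'\<in>fst ` set e'. c' < c" using v by auto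
  show "?A \<union> ?B \<union> ?C \<subseteq> ?L"
  proof (intro Un_least)
    show "?A \<subseteq> ?L"
    proof (cases "a = cnt bl")
      case True
      show ?thesis
      proof
        fix p assume "p \<in> ?A"
        then obtain x y where p: "p = ((c,bl)#x, y)" and xy: "(x,y) \<in> T v (b#w) e'" using True by auto
        then have vx: "validE x" "validE y" "letters x = v" "letters y = b#w" "mergeE x y = e'"
          by (auto simp: T_def)
        obtain c2 bl2 y' where y: "y = (c2,bl2)#y'" using vx(4) by (cases y) auto
        have "c2 \<in> fst ` set e'" using mergeE_sub(2)[of y x] vx(5) y by auto
        then have c2: "c2 < c" using vc(4) by auto
        have xc: "\<forall>c'\<in>fst ` set x. c' < c" using vc(4) mergeE_sub(1)[of x y] vx(5) by blast
        have "validE ((c,bl)#x)" using xc vc vx by simp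
        moreover have "mergeE ((c,bl)#x) y = (c,bl)#e'" using c2 y vx(5) by simp
        moreover have "letters ((c,bl)#x) = a#v" using vx True by simp
        ultimately show "p \<in> ?L" unfolding p T_def using vx by simp
      qed
    qed simp
    show "?B \<subseteq> ?L"
    proof (cases "b = cnt bl")
      case True
      show ?thesis
      proof
        fix p assume "p \<in> ?B"
        then obtain x y where p: "p = (x, (c,bl)#y)" and xy: "(x,y) \<in> T (a#v) w e'" using True by auto
        then have vx: "validE x" "validE y" "letters x = a#v" "letters y = w" "mergeE x y = e'"
          by (auto simp: T_def)
        obtain c1 bl1 x' where x: "x = (c1,bl1)#x'" using vx(3) by (cases x) auto
        have "c1 \<in> fst ` set e'" using mergeE_sub(1)[of x y] vx(5) x by auto
        then have c1: "c1 < c" using vc(4) by auto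
        have yc: "\<forall>c'\<in>fst ` set y. c' < c" using vc(4) mergeE_sub(2)[of y x] vx(5) by blast
        have "validE ((c,bl)#y)" using yc vc vx by simp
        moreover have "mergeE x ((c,bl)#y) = (c,bl)#e'" using c1 x vx(5) by simp
        moreover have "letters ((c,bl)#y) = b#w" using vx True by simp
        ultimately show "p \<in> ?L" unfolding p T_def using vx by simp
      qed
    qed simp
    show "?C \<subseteq> ?L"
    proof
      fix p assume "p \<in> ?C"
      then obtain x y b1 b2 where p: "p = ((c,b1)#x, (c,b2)#y)" and xy: "(x,y) \<in> T v w e'"
        and bb: "(b1,b2) \<in> SP bl a b" by auto
      then have vx: "validE x" "validE y" "letters x = v" "letters y = w" "mergeE x y = e'"
        by (auto simp: T_def)
      have xc: "\<forall>c'\<in>fst ` set x. c' < c" using vc(4) mergeE_sub(1)[of x y] vx(5) by blast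
      have yc: "\<forall>c'\<in>fst ` set y. c' < c" using vc(4) mergeE_sub(2)[of y x] vx(5) by blast
      have sp: "b1 @ b2 = bl" "okb b1" "okb b2" "cnt b1 = a" "cnt b2 = b" using bb by (auto simp: SP_def)
      have "validE ((c,b1)#x)" "validE ((c,b2)#y)" using xc yc vc vx sp by simp_all
      moreover have "mergeE ((c,b1)#x) ((c,b2)#y) = (c,bl)#e'" using sp vx(5) by simp
      moreover have "letters ((c,b1)#x) = a#v" "letters ((c,b2)#y) = b#w" using vx sp by simp_all
      ultimately show "p \<in> ?L" unfolding p T_def by simp
    qed
  qed
qed



lemma cnt_append[simp]: "cnt (a @ b) = cnt a + cnt b" by (simp add: cnt_def)
lemma cnt_Nil[simp]: "cnt [] = 0" by (simp add: cnt_def)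
lemma cnt_Cons[simp]: "cnt (t # r) = (if t then Suc (cnt r) else cnt r)" by (simp add: cnt_def)

lemma cnt0_last: "cnt us = 0 \<Longrightarrow> us \<noteq> [] \<Longrightarrow> \<not> last us"
  by (induction us) (auto split: if_splits)

lemma SP_unique:
  assumes "(x,y) \<in> SP bl a b" "(x',y') \<in> SP bl a b" shows "x = x' \<and> y = y'"
proof -
  have h: "x @ y = bl" "okb x" "cnt x = a" "x' @ y' = bl" "okb x'" "cnt x' = a"
    using assms by (auto simp: SP_def)
  have key: "x = x''" if "x = x'' @ us" "cnt x = cnt x''" "okb x" for x x'' us :: "bool list"
  proof (cases "us = []")
    case False
    have "cnt us = 0" using that by simp
    then have "\<not> last us" using cnt0_last False by blast
    moreover have "last x = last us" using that False by simp
    ultimately show ?thesis using that False by (simp add: okb_def)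
  qed (use that in simp)
  from h(1,4) obtain us where "(x = x' @ us \<and> us @ y = y') \<or> (x @ us = x' \<and> y = us @ y')"
    by (metis append_eq_append_conv2)
  then have "x = x'"
  proof
    assume "x = x' @ us \<and> us @ y = y'"
    then show ?thesis using key[of x x' us] h by simp
  next
    assume "x @ us = x' \<and> y = us @ y'"
    then show ?thesis using key[of x' x us] h by simp
  qed
  then show ?thesis using h by (metis same_append_eq)
qed

lemma SP_exists: "okb bl \<Longrightarrow> cnt bl = a + b \<Longrightarrow> \<exists>x y. (x,y) \<in> SP bl a b"
proof (induction bl arbitrary: a b)
  case Nil
  then show ?case by (auto simp: SP_def okb_def)
next
  case (Cons t r)
  show ?case
  proof (cases "a = 0")
    case True
    then have "([], t # r) \<in> SP (t # r) a b" using Cons.prems by (simp add: SP_def okb_def)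
    then show ?thesis by blast
  next
    case False
    have okr: "okb r" using Cons.prems(1) by (cases r) (auto simp: okb_def)
    show ?thesis
    proof (cases t)
      case True
      then have "cnt r = (a - 1) + b" using Cons.prems False by simp
      then obtain x y where xy: "(x,y) \<in> SP r (a - 1) b" using Cons.IH okr by blast
      then have "(True # x, y) \<in> SP (t # r) a b" using True False
        by (auto simp: SP_def okb_def)
      then show ?thesis by blast
    next
      case f: False
      then have "cnt r = a + b" using Cons.prems by simp
      then obtain x y where xy: "(x,y) \<in> SP r a b" using Cons.IH okr by blast
      then have "x \<noteq> []" using False by (auto simp: SP_def)
      then have "(False # x, y) \<in> SP (t # r) a b" using xy f
        by (auto simp: SP_def okb_def)
      then show ?thesis by blast
    qed
  qed
qed

lemma card_SP: "okb bl \<Longrightarrow> card (SP bl a b) = (if cnt bl = a + b then 1 else 0)"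
proof (cases "cnt bl = a + b")
  case True
  assume ok: "okb bl"
  obtain x y where xy: "(x,y) \<in> SP bl a b" using SP_exists[OF ok True] by blast
  have "SP bl a b = {(x,y)}"
  proof (rule pair_set_eqI)
    fix x' y' show "(x',y') \<in> SP bl a b \<longleftrightarrow> (x',y') \<in> {(x,y)}"
      using SP_unique[OF xy, of x' y'] xy by auto
  qed
  then show ?thesis using True by simp
next
  case False
  then have "SP bl a b = {}" by (auto simp: SP_def)
  then show ?thesis using False by simp
qed

lemma count_image_Cons: "count (image_mset ((#) a) M) (l # r) = (if a = l then count M r else 0)"
  by (induction M) auto

lemma count_stuffle_Cons:
  "count (stuffle (a#v) (b#w)) (l#r) =
     (if a = l then count (stuffle v (b#w)) r else 0)
   + (if b = l then count (stuffle (a#v) w) r else 0)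
   + (if a + b = l then count (stuffle v w) r else 0)"
  by (simp add: count_image_Cons)

lemma count_image_Cons_Nil: "count (image_mset ((#) a) M) [] = 0"
  by (induction M) auto

lemma count_stuffle_Nil: "count (stuffle (a#v) (b#w)) [] = 0"
  by (simp add: count_image_Cons_Nil)



lemma T_cols:
  assumes "(x,y) \<in> T W1 W2 e'" "\<forall>c'\<in>fst ` set e'. c' < c"
  shows "c \<notin> fst ` set x" "c \<notin> fst ` set y"
proof -
  have "mergeE x y = e'" using assms(1) by (simp add: T_mem)
  then have "fst ` set x \<subseteq> fst ` set e'" "fst ` set y \<subseteq> fst ` set e'"
    using mergeE_sub[of x y] mergeE_sub[of y x] by auto
  then show "c \<notin> fst ` set x" "c \<notin> fst ` set y" using assms(2) by (meson less_irrefl subsetD)+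
qed

lemma main_count:
  "validE e \<Longrightarrow> finite (T W1 W2 e) \<and> card (T W1 W2 e) = count (stuffle W1 W2) (letters e)"
proof (induction e arbitrary: W1 W2)
  case Nil
  show ?case
  proof (cases W1)
    case Nil
    then show ?thesis by (simp add: T_Nil3)
  next
    case (Cons a v)
    then show ?thesis by (cases W2) (simp_all add: T_Nil3 count_image_Cons_Nil)
  qed
next
  case (Cons x e')
  obtain c bl where x: "x = (c,bl)" by (cases x)
  have ve: "validE e'" "okb bl" "\<forall>c'\<in>fst ` set e'. c' < c" using Cons.prems x by auto
  note IH = Cons.IH[OF ve(1)]
  show ?case
  proof (cases W1)
    case Nil
    then show ?thesis using Cons.prems by (simp add: T_Nil1)
  next
    case (Cons a v)
    show ?thesis
    proof (cases W2)
      case Nil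
      then show ?thesis using Cons.prems \<open>W1 = a # v\<close> by (simp add: T_Nil2)
    next
      case (Cons b w)
      define l where "l = cnt bl"
      define A where "A = (if a = cnt bl then (\<lambda>(x,y). ((c,bl)#x, y)) ` T v (b#w) e' else {})"
      define B where "B = (if b = cnt bl then (\<lambda>(x,y). (x, (c,bl)#y)) ` T (a#v) w e' else {})"
      define C where "C = (\<lambda>((x,y),(b1,b2)). ((c,b1)#x, (c,b2)#y)) ` (T v w e' \<times> SP bl a b)"
      have TT: "T W1 W2 (x # e') = A \<union> B \<union> C"
        unfolding A_def B_def C_def x \<open>W1 = a # v\<close> \<open>W2 = b # w\<close>
        using T_Cons Cons.prems x by blast
      have fA: "finite A" unfolding A_def using IH[of v "b#w"] by (simp only: finite_imageI if_splits finite.emptyI, blast)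
      have fB: "finite B" unfolding B_def using IH[of "a#v" w] by (simp only: finite_imageI if_splits finite.emptyI, blast)
      have fSP': "finite (SP bl a b)"
      proof (rule finite_subset)
        show "SP bl a b \<subseteq> (\<lambda>i. (take i bl, drop i bl)) ` {..length bl}"
        proof
          fix p assume "p \<in> SP bl a b"
          then obtain x y where p: "p = (x,y)" "x @ y = bl" by (auto simp: SP_def)
          then show "p \<in> (\<lambda>i. (take i bl, drop i bl)) ` {..length bl}"
            by (intro image_eqI[where x="length x"]) auto
        qed
      qed simp
      have fC: "finite C" using IH fSP' unfolding C_def by simp
      have cA: "card A = (if a = l then card (T v (b#w) e') else 0)"
      proof -
        have "inj_on (\<lambda>(x,y). ((c,bl)#x, y)) (T v (b#w) e')" by (auto simp: inj_on_def)
        then show ?thesis unfolding A_def l_def by (simp add: card_image)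
      qed
      have cB: "card B = (if b = l then card (T (a#v) w e') else 0)"
      proof -
        have "inj_on (\<lambda>(x,y). (x, (c,bl)#y)) (T (a#v) w e')" by (auto simp: inj_on_def)
        then show ?thesis unfolding B_def l_def by (simp add: card_image)
      qed
      have cC: "card C = (if a + b = l then card (T v w e') else 0)"
      proof -
        have "inj_on (\<lambda>((x,y),(b1,b2)). ((c,b1)#x, (c,b2)#y)) (T v w e' \<times> SP bl a b)"
          by (auto simp: inj_on_def)
        then have "card C = card (T v w e') * card (SP bl a b)"
          unfolding C_def by (simp add: card_image card_cartesian_product)
        then show ?thesis using card_SP[OF ve(2), of a b] unfolding l_def by auto
      qed
      have dA: "c \<in> fst ` set (fst p) \<and> c \<notin> fst ` set (snd p)" if "p \<in> A" for p
      proof -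
        have "p \<in> (\<lambda>(x,y). ((c,bl)#x, y)) ` T v (b#w) e'" using that unfolding A_def by (simp split: if_splits)
        then obtain xy where "xy \<in> T v (b#w) e'" "p = (\<lambda>(x,y). ((c,bl)#x, y)) xy" by (rule imageE)
        then obtain x y where "p = ((c,bl)#x, y)" "(x,y) \<in> T v (b#w) e'" by (cases xy) simp
        then show ?thesis using T_cols[OF _ ve(3)] by auto
      qed
      have dB: "c \<notin> fst ` set (fst p) \<and> c \<in> fst ` set (snd p)" if "p \<in> B" for p
      proof -
        have "p \<in> (\<lambda>(x,y). (x, (c,bl)#y)) ` T (a#v) w e'" using that unfolding B_def by (simp split: if_splits)
        then obtain xy where "xy \<in> T (a#v) w e'" "p = (\<lambda>(x,y). (x, (c,bl)#y)) xy" by (rule imageE)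
        then obtain x y where "p = (x, (c,bl)#y)" "(x,y) \<in> T (a#v) w e'" by (cases xy) simp
        then show ?thesis using T_cols[OF _ ve(3)] by auto
      qed
      have dC: "c \<in> fst ` set (fst p) \<and> c \<in> fst ` set (snd p)" if "p \<in> C" for p
        using that unfolding C_def by auto
      have "A \<inter> B = {}" using dA dB by blast
      moreover have "(A \<union> B) \<inter> C = {}" using dA dB dC by blast
      ultimately have "card (A \<union> B \<union> C) = card A + card B + card C"
        using fA fB fC by (simp add: card_Un_disjoint)
      moreover have le: "letters (x # e') = l # letters e'" unfolding x l_def by simp
      moreover have cs: "count (stuffle W1 W2) (letters (x # e')) =
          (if a = l then count (stuffle v (b#w)) (letters e') else 0)
        + (if b = l then count (stuffle (a#v) w) (letters e') else 0)
        + (if a + b = l then count (stuffle v w) (letters e') else 0)"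
        unfolding \<open>W1 = a # v\<close> \<open>W2 = b # w\<close> le by (rule count_stuffle_Cons)
      ultimately show ?thesis
        using TT fA fB fC cA cB cC IH
        by (simp del: stuffle.simps)
    qed
  qed
qed



definition rowsE :: "ev list \<Rightarrow> (nat \<times> bool) list" where
  "rowsE e = concat (map (\<lambda>(c,bl). map (Pair c) bl) e)"
definition toMP :: "ev list \<Rightarrow> mpart" where "toMP e = (rowsE e, fst ` set e)"

lemma rowsE_Nil[simp]: "rowsE [] = []" by (simp add: rowsE_def)
lemma rowsE_Cons[simp]: "rowsE ((c,bl)#e) = map (Pair c) bl @ rowsE e" by (simp add: rowsE_def)
lemma rowsE_append: "rowsE (a @ b) = rowsE a @ rowsE b" by (simp add: rowsE_def)

lemma rowsE_fst: "r \<in> set (rowsE e) \<Longrightarrow> fst r \<in> fst ` set e"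
  by (induction e) auto

lemma merge_rows_Nil2[simp]: "merge_rows xs [] = xs" by (cases xs) auto

lemma merge_rows_L1: "(\<forall>r\<in>set ys. fst r \<le> c) \<Longrightarrow>
   merge_rows (map (Pair c) bl @ xs) ys = map (Pair c) bl @ merge_rows xs ys"
proof (induction bl)
  case (Cons b bl)
  then show ?case by (cases ys) auto
qed simp

lemma merge_rows_L2: "(\<forall>r\<in>set xs. fst r < c) \<Longrightarrow>
   merge_rows xs (map (Pair c) bl @ ys) = map (Pair c) bl @ merge_rows xs ys"
proof (induction bl)
  case (Cons b bl)
  then show ?case by (cases xs) auto
qed simp

lemma rowsE_le: "validE ((c,b)#ys) \<Longrightarrow> \<forall>r\<in>set (rowsE ((c,b)#ys)). fst r \<le> c"
proof
  fix r assume v: "validE ((c,b)#ys)" and r: "r \<in> set (rowsE ((c,b)#ys))"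
  have "fst r \<in> fst ` set ((c,b)#ys)" using rowsE_fst[OF r] .
  then show "fst r \<le> c" using v by auto
qed

lemma rowsE_lt: "\<forall>c'\<in>fst ` set xs. c' < c \<Longrightarrow> \<forall>r\<in>set (rowsE xs). fst r < c"
  using rowsE_fst by blast

lemma rows_merge: "validE e1 \<Longrightarrow> validE e2 \<Longrightarrow> rowsE (mergeE e1 e2) = merge_rows (rowsE e1) (rowsE e2)"
proof (induction e1 e2 rule: mergeE.induct)
  case (3 c1 b1 xs c2 b2 ys)
  have v1: "validE xs" "\<forall>c'\<in>fst ` set xs. c' < c1" using "3.prems" by auto
  have v2: "validE ys" "\<forall>c'\<in>fst ` set ys. c' < c2" using "3.prems" by auto
  consider "c2 < c1" | "c1 < c2" | "c1 = c2" by linarith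
  then show ?case
  proof cases
    case 1
    have le: "\<forall>r\<in>set (rowsE ((c2,b2)#ys)). fst r \<le> c1"
    proof
      fix r assume "r \<in> set (rowsE ((c2,b2)#ys))"
      then have "fst r \<le> c2" using rowsE_le[OF "3.prems"(2)] by blast
      then show "fst r \<le> c1" using 1 by simp
    qed
    have "rowsE (mergeE xs ((c2,b2)#ys)) = merge_rows (rowsE xs) (rowsE ((c2,b2)#ys))"
      using "3.IH"(1)[OF 1 v1(1) "3.prems"(2)] .
    then show ?thesis using 1 merge_rows_L1[OF le, of b1 "rowsE xs"] by simp
  next
    case 2
    have lt: "\<forall>r\<in>set (rowsE ((c1,b1)#xs)). fst r < c2"
    proof
      fix r assume "r \<in> set (rowsE ((c1,b1)#xs))"
      then have "fst r \<le> c1" using rowsE_le[OF "3.prems"(1)] by blast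
      then show "fst r < c2" using 2 by simp
    qed
    have "rowsE (mergeE ((c1,b1)#xs) ys) = merge_rows (rowsE ((c1,b1)#xs)) (rowsE ys)"
      using "3.IH"(2)[OF _ 2 "3.prems"(1) v2(1)] 2 by simp
    then show ?thesis using 2 merge_rows_L2[OF lt, of b2 "rowsE ys"] by simp
  next
    case 3
    have le: "\<forall>r\<in>set (rowsE ((c2,b2)#ys)). fst r \<le> c1"
      using rowsE_le[OF "3.prems"(2)] 3 by blast
    have lt: "\<forall>r\<in>set (rowsE xs). fst r < c2" using rowsE_lt[OF v1(2)] 3 by simp
    have "rowsE (mergeE xs ys) = merge_rows (rowsE xs) (rowsE ys)"
      using "3.IH"(3) 3 v1(1) v2(1) by simp
    then show ?thesis using 3 merge_rows_L1[OF le, of b1 "rowsE xs"] merge_rows_L2[OF lt, of b2 "rowsE ys"]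
      by simp
  qed
qed auto

lemma rowsE_nonempty: "validE e \<Longrightarrow> circ_word (letters e) \<Longrightarrow> e \<noteq> [] \<Longrightarrow> rowsE e \<noteq> []"
proof -
  assume "e \<noteq> []" "circ_word (letters e)"
  then obtain c bl e' where e: "e = (c,bl)#e'" "cnt bl \<noteq> 0"
    by (cases e) (auto simp: circ_word_def)
  then have "bl \<noteq> []" by auto
  then show ?thesis using e by simp
qed

lemma Phi_toMP:
  assumes "validE e1" "validE e2" "circ_word (letters e1)" "circ_word (letters e2)"
  shows "Phi (toMP e1) (toMP e2) = toMP (mergeE e1 e2)"
proof (cases "e1 = []")
  case True
  then show ?thesis by (simp add: Phi_def toMP_def)
next
  case False
  then have r1: "rowsE e1 \<noteq> []" using rowsE_nonempty assms by blast
  show ?thesis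
  proof (cases "e2 = []")
    case True
    then show ?thesis using r1 by (simp add: Phi_def toMP_def)
  next
    case False
    then have r2: "rowsE e2 \<noteq> []" using rowsE_nonempty assms by blast
    show ?thesis using r1 r2 rows_merge[OF assms(1,2)] mergeE_cols[of e1 e2]
      by (simp add: Phi_def toMP_def)
  qed
qed

lemma filter_rowsE_notin: "c \<notin> fst ` set e \<Longrightarrow> filter (\<lambda>r. fst r = c) (rowsE e) = []"
  using rowsE_fst[of _ e] by (auto simp: filter_empty_conv)

lemma filter_rowsE: "validE e \<Longrightarrow> (c,bl) \<in> set e \<Longrightarrow> filter (\<lambda>r. fst r = c) (rowsE e) = map (Pair c) bl"
proof (induction e)
  case (Cons x e')
  obtain c' bl' where x: "x = (c',bl')" by (cases x)
  have v: "validE e'" "\<forall>c''\<in>fst ` set e'. c'' < c'" using Cons.prems x by auto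
  have f1: "filter (\<lambda>r. fst r = c) (map (Pair c') bl') = (if c' = c then map (Pair c) bl' else [])"
    by (induction bl') auto
  show ?case
  proof (cases "(c,bl) = (c',bl')")
    case True
    then have "c \<notin> fst ` set e'" using v by auto
    then show ?thesis using True x f1 filter_rowsE_notin by simp
  next
    case False
    then have "(c,bl) \<in> set e'" using Cons.prems x by auto
    then have "c < c'" using v by force
    then show ?thesis using Cons.IH[OF v(1) \<open>(c,bl) \<in> set e'\<close>] x f1 by simp
  qed
qed simp

lemma e_repr: "validE e \<Longrightarrow> e = map (\<lambda>c. (c, map snd (filter (\<lambda>r. fst r = c) (rowsE e)))) (map fst e)"
proof -
  assume v: "validE e"
  have "map (\<lambda>x. (fst x, map snd (filter (\<lambda>r. fst r = fst x) (rowsE e)))) e = e"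
  proof (rule map_idI)
    fix x assume "x \<in> set e"
    moreover obtain c bl where "x = (c,bl)" by (cases x)
    ultimately show "(fst x, map snd (filter (\<lambda>r. fst r = fst x) (rowsE e))) = x"
      using filter_rowsE[OF v] by (simp add: comp_def)
  qed
  then show ?thesis by (simp add: comp_def)
qed

lemma sorted_gt_unique: "sorted_wrt (>) (xs::nat list) \<Longrightarrow> sorted_wrt (>) ys \<Longrightarrow> set xs = set ys \<Longrightarrow> xs = ys"
proof (induction xs arbitrary: ys)
  case Nil
  then show ?case by simp
next
  case (Cons x xs)
  then obtain y ys' where ys: "ys = y # ys'" by (cases ys) auto
  have "y \<le> x" using Cons.prems ys by (metis insert_iff less_imp_le list.simps(15) order_refl sorted_wrt.simps(2))
  moreover have "x \<le> y" using Cons.prems ys by (metis insert_iff less_imp_le list.simps(15) order_refl sorted_wrt.simps(2))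
  ultimately have xy: "x = y" by simp
  have "x \<notin> set xs" "y \<notin> set ys'" using Cons.prems ys by auto
  then have "set xs = set ys'" using Cons.prems(3) ys xy by auto
  then show ?case using Cons.IH Cons.prems ys xy by simp
qed

lemma toMP_inj: "validE e1 \<Longrightarrow> validE e2 \<Longrightarrow> toMP e1 = toMP e2 \<Longrightarrow> e1 = e2"
proof -
  assume v: "validE e1" "validE e2" and t: "toMP e1 = toMP e2"
  have r: "rowsE e1 = rowsE e2" and c: "fst ` set e1 = fst ` set e2" using t by (auto simp: toMP_def)
  have "map fst e1 = map fst e2"
    using sorted_gt_unique[of "map fst e1" "map fst e2"] v c by (simp add: validE_def)
  then show ?thesis using e_repr[OF v(1)] e_repr[OF v(2)] r by metis
qed



fun lm :: "(nat \<times> bool) list \<Rightarrow> bool" where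
  "lm [] = True"
| "lm (x # ys) = (((ys = [] \<or> fst (hd ys) < fst x) \<longrightarrow> snd x) \<and> lm ys)"

lemma all_less_Suc_split: "(\<forall>i<Suc n. P i) \<longleftrightarrow> P 0 \<and> (\<forall>i<n. P (Suc i))"
  using less_Suc_eq_0_disj by auto

lemma lm_iff: "lm xs \<longleftrightarrow> (\<forall>i<length xs. (Suc i = length xs \<or> fst (xs ! Suc i) < fst (xs ! i)) \<longrightarrow> snd (xs ! i))"
proof (induction xs)
  case (Cons x ys)
  have "(\<forall>i<length (x#ys). (Suc i = length (x#ys) \<or> fst ((x#ys) ! Suc i) < fst ((x#ys) ! i)) \<longrightarrow> snd ((x#ys) ! i))
    \<longleftrightarrow> ((Suc 0 = length (x#ys) \<or> fst ((x#ys) ! Suc 0) < fst x) \<longrightarrow> snd x) \<and>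
        (\<forall>i<length ys. (Suc i = length ys \<or> fst (ys ! Suc i) < fst (ys ! i)) \<longrightarrow> snd (ys ! i))"
    by (simp only: length_Cons all_less_Suc_split nth_Cons_Suc nth_Cons_0 nat.inject)
  moreover have "((Suc 0 = length (x#ys) \<or> fst ((x#ys) ! Suc 0) < fst x) \<longrightarrow> snd x) \<longleftrightarrow>
      ((ys = [] \<or> fst (hd ys) < fst x) \<longrightarrow> snd x)"
    by (cases ys) auto
  ultimately show ?case using Cons.IH unfolding lm.simps by blast
qed simp

lemma lm_block: "okb bl \<Longrightarrow> lm rest \<Longrightarrow> (\<forall>r\<in>set rest. fst r < c) \<Longrightarrow> lm (map (Pair c) bl @ rest)"
proof (induction bl)
  case (Cons b bl)
  show ?case
  proof (cases "bl = []")
    case True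
    then show ?thesis using Cons.prems by (simp add: okb_def)
  next
    case False
    have "okb bl" using Cons.prems(1) False by (simp add: okb_def)
    then have "lm (map (Pair c) bl @ rest)" using Cons.IH Cons.prems by simp
    then show ?thesis using False by (cases bl) auto
  qed
qed simp

lemma lm_rowsE: "validE e \<Longrightarrow> lm (rowsE e)"
proof (induction e)
  case (Cons x e')
  obtain c bl where x: "x = (c,bl)" by (cases x)
  have v: "validE e'" "okb bl" "\<forall>c'\<in>fst ` set e'. c' < c" using Cons.prems x by auto
  show ?case using lm_block[OF v(2) Cons.IH[OF v(1)] rowsE_lt[OF v(3)]] x by simp
qed simp

lemma sorted_rep: "sorted_wrt (\<ge>) (replicate n (c::nat))"
  by (induction n) auto

lemma sorted_rowsE: "validE e \<Longrightarrow> sorted_wrt (\<ge>) (map fst (rowsE e))"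
proof (induction e)
  case (Cons x e')
  obtain c bl where x: "x = (c,bl)" by (cases x)
  have v: "validE e'" "\<forall>c'\<in>fst ` set e'. c' < c" using Cons.prems x by auto
  have m: "map fst (rowsE (x#e')) = replicate (length bl) c @ map fst (rowsE e')"
    using x by (simp add: map_replicate_const comp_def)
  have "\<forall>r\<in>set (rowsE e'). fst r < c" using rowsE_lt[OF v(2)] .
  then have "\<forall>x\<in>set (replicate (length bl) c). \<forall>y\<in>set (map fst (rowsE e')). y \<le> x"
    by auto
  then show ?case unfolding m sorted_wrt_append using Cons.IH[OF v(1)] sorted_rep by blast
qed simp

lemma is_mp_toMP:
  assumes v: "validE e" and h: "e = [] \<or> snd (hd e) \<noteq> []"
  shows "is_mp (toMP e)"
proof -
  have p1: "\<forall>r\<in>set (rowsE e). fst r > 0"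
  proof
    fix r assume "r \<in> set (rowsE e)"
    then have "fst r \<in> fst ` set e" by (rule rowsE_fst)
    then show "fst r > 0" using v by (auto simp: validE_def)
  qed
  have p3: "\<forall>i<length (rowsE e). (Suc i = length (rowsE e) \<or> fst (rowsE e ! Suc i) < fst (rowsE e ! i)) \<longrightarrow> snd (rowsE e ! i)"
    using lm_rowsE[OF v] lm_iff by blast
  have p4: "\<forall>r\<in>set (rowsE e). fst r \<in> fst ` set e" using rowsE_fst by blast
  have p5: "\<forall>c\<in>fst ` set e. 1 \<le> c \<and> (\<exists>r\<in>set (rowsE e). c \<le> fst r)"
  proof (cases e)
    case (Cons x e')
    obtain c0 bl0 where x: "x = (c0,bl0)" by (cases x)
    have "bl0 \<noteq> []" using h Cons x by simp
    then have r: "(c0, hd bl0) \<in> set (rowsE e)" using Cons x by (cases bl0) auto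
    show ?thesis
    proof
      fix c assume c: "c \<in> fst ` set e"
      have "c \<le> c0" using c v Cons x by auto
      moreover have "1 \<le> c" using c v by (auto simp: validE_def)
      ultimately show "1 \<le> c \<and> (\<exists>r\<in>set (rowsE e). c \<le> fst r)" using r by force
    qed
  qed simp
  show ?thesis unfolding is_mp_def Let_def toMP_def fst_conv snd_conv
    using p1 p3 p4 p5 sorted_rowsE[OF v] by blast
qed

definition kk :: "(nat \<times> bool) list \<Rightarrow> nat \<Rightarrow> nat" where
  "kk R m = length (filter (\<lambda>r. fst r = m \<and> snd r) R)"
definition zz :: "nat set \<Rightarrow> nat \<Rightarrow> nat \<Rightarrow> nat" where
  "zz C lo hi = card {c \<in> C. lo < c \<and> c \<le> hi}"
definition nx :: "nat list \<Rightarrow> nat \<Rightarrow> nat" where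
  "nx ms j = (if Suc j < length ms then ms ! Suc j else 0)"
definition typw :: "(nat \<times> bool) list \<Rightarrow> nat set \<Rightarrow> nat list \<Rightarrow> word" where
  "typw R C ms = concat (map (\<lambda>j. kk R (ms!j) # replicate (zz C (nx ms j) (ms!j) - 1) 0) [0..<length ms])"

lemma mp_type_typ: "mp_type (R, C) = typw R C (remdups (map fst R))"
  by (simp add: mp_type_def typw_def kk_def zz_def nx_def Let_def)

lemma typw_Nil[simp]: "typw R C [] = []" by (simp add: typw_def)

lemma typw_Cons: "typw R C (m # ms) =
   (kk R m # replicate (zz C (if ms = [] then 0 else hd ms) m - 1) 0) @ typw R C ms"
proof -
  have u: "[0..<length (m#ms)] = 0 # map Suc [0..<length ms]"
    by (simp add: upt_conv_Cons map_Suc_upt del: upt_Suc)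
  have n0: "nx (m#ms) 0 = (if ms = [] then 0 else hd ms)"
    by (cases ms) (auto simp: nx_def)
  have ns: "nx (m#ms) (Suc j) = nx ms j" for j by (simp add: nx_def)
  show ?thesis unfolding typw_def u by (simp add: n0 ns comp_def)
qed

lemma typw_cong:
  assumes "\<forall>m\<in>set ms. kk R m = kk R' m" "\<forall>m\<in>set ms. {c\<in>C. c \<le> m} = {c\<in>C'. c \<le> m}"
  shows "typw R C ms = typw R' C' ms"
proof -
  have z: "zz C lo m = zz C' lo m" if "m \<in> set ms" for lo m
  proof -
    have "{c \<in> C. lo < c \<and> c \<le> m} = {c \<in> {c\<in>C. c \<le> m}. lo < c}" by auto
    also have "\<dots> = {c \<in> {c\<in>C'. c \<le> m}. lo < c}" using assms(2) that by simp
    also have "\<dots> = {c \<in> C'. lo < c \<and> c \<le> m}" by auto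
    finally show ?thesis unfolding zz_def by simp
  qed
  show ?thesis unfolding typw_def
    by (rule arg_cong[where f=concat], rule map_cong[OF refl]) (simp add: assms(1) z)
qed

lemma remdups_rep: "c \<notin> set xs \<Longrightarrow> remdups (replicate n c @ xs) = (if n = 0 then remdups xs else c # remdups xs)"
  by (induction n) auto

lemma ms_lemma: "validE e \<Longrightarrow> remdups (map fst (rowsE e)) = map fst (filter (\<lambda>x. snd x \<noteq> []) e)"
proof (induction e)
  case (Cons x e')
  obtain c bl where x: "x = (c,bl)" by (cases x)
  have v: "validE e'" "\<forall>c'\<in>fst ` set e'. c' < c" using Cons.prems x by auto
  have m: "map fst (rowsE (x#e')) = replicate (length bl) c @ map fst (rowsE e')"
    using x by (simp add: map_replicate_const comp_def)
  have "c \<notin> set (map fst (rowsE e'))" using rowsE_lt[OF v(2)] by auto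
  then show ?case unfolding m using Cons.IH[OF v(1)] x by (simp add: remdups_rep)
qed simp

lemma rowsE_empty: "\<forall>x\<in>set e0. snd x = [] \<Longrightarrow> rowsE e0 = []"
  by (induction e0) auto



lemma kk_block_other: "m \<noteq> c \<Longrightarrow> kk (map (Pair c) bl @ R) m = kk R m"
  by (induction bl) (auto simp: kk_def)

lemma kk_block_same: "\<forall>r\<in>set R. fst r < c \<Longrightarrow> kk (map (Pair c) bl @ R) c = cnt bl"
proof -
  assume a: "\<forall>r\<in>set R. fst r < c"
  have "filter (\<lambda>r. fst r = c \<and> snd r) R = []" using a by (auto simp: filter_empty_conv)
  moreover have "length (filter (\<lambda>r. fst r = c \<and> snd r) (map (Pair c) bl)) = cnt bl"
    by (induction bl) (auto simp: cnt_def)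
  ultimately show ?thesis by (simp add: kk_def)
qed

lemma sorted_gt_distinct: "sorted_wrt (>) (xs::nat list) \<Longrightarrow> distinct xs"
  by (induction xs) auto

lemma type_toMP:
  "validE e \<Longrightarrow> (e = [] \<or> snd (hd e) \<noteq> []) \<Longrightarrow>
   typw (rowsE e) (fst ` set e) (map fst (filter (\<lambda>x. snd x \<noteq> []) e)) = letters e"
proof (induction "length e" arbitrary: e rule: less_induct)
  case less
  show ?case
  proof (cases e)
    case Nil
    then show ?thesis by simp
  next
    case (Cons x t)
    obtain c bl where x: "x = (c,bl)" by (cases x)
    have bl: "bl \<noteq> []" using less.prems(2) Cons x by simp
    define e0 where "e0 = takeWhile (\<lambda>x. snd x = []) t"
    define e' where "e' = dropWhile (\<lambda>x. snd x = []) t"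
    have t: "t = e0 @ e'" unfolding e0_def e'_def by simp
    have e0e: "\<forall>y\<in>set e0. snd y = []" unfolding e0_def by (auto dest: set_takeWhileD)
    have hd': "e' = [] \<or> snd (hd e') \<noteq> []" unfolding e'_def using hd_dropWhile by blast
    have ve: "validE ((c,bl) # e0 @ e')" using less.prems(1) Cons x t by simp
    then have srt: "sorted_wrt (>) (c # map fst e0 @ map fst e')" by (simp add: validE_def)
    then have s0: "\<forall>y\<in>fst ` set e0. y < c" "\<forall>y\<in>fst ` set e'. y < c"
      "\<forall>y\<in>fst ` set e0. \<forall>z\<in>fst ` set e'. z < y"
      by (auto simp: sorted_wrt_append)
    have s04: "distinct (map fst e0)" using srt sorted_gt_distinct by (simp add: sorted_wrt_append)
    have ve': "validE e'" using ve by (auto simp: validE_def sorted_wrt_append)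
    have pos: "\<forall>y\<in>fst ` set e0. 1 \<le> y" "1 \<le> c" using ve by (auto simp: validE_def)
    have R: "rowsE e = map (Pair c) bl @ rowsE e'"
      using Cons x t rowsE_empty[OF e0e] by (simp add: rowsE_append)
    have Cs: "fst ` set e = insert c (fst ` set e0 \<union> fst ` set e')" using Cons x t by auto
    have f0: "filter (\<lambda>x. snd x \<noteq> []) e0 = []" using e0e by (auto simp: filter_empty_conv)
    define ms' where "ms' = map fst (filter (\<lambda>x. snd x \<noteq> []) e')"
    have ms: "map fst (filter (\<lambda>x. snd x \<noteq> []) e) = c # ms'"
      using Cons x t f0 bl unfolding ms'_def by simp
    have ms'sub: "set ms' \<subseteq> fst ` set e'" unfolding ms'_def by auto
    have lt': "\<forall>r\<in>set (rowsE e'). fst r < c" using rowsE_lt[OF s0(2)] .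
    define lo where "lo = (if ms' = [] then 0 else hd ms')"
    have kk0: "kk (rowsE e) c = cnt bl" unfolding R using kk_block_same[OF lt'] .
    have zset: "{y \<in> fst ` set e. lo < y \<and> y \<le> c} = insert c (fst ` set e0)"
    proof (cases e')
      case Nil
      then have "ms' = []" unfolding ms'_def by simp
      then have "lo = 0" unfolding lo_def by simp
      then show ?thesis using Cs Nil pos s0 by force
    next
      case (Cons y e'')
      obtain c' bl' where y: "y = (c',bl')" by (cases y)
      have "bl' \<noteq> []" using hd' Cons y by simp
      then have "ms' = c' # map fst (filter (\<lambda>x. snd x \<noteq> []) e'')" unfolding ms'_def using Cons y by simp
      then have lo: "lo = c'" unfolding lo_def by simp
      have "validE ((c',bl') # e'')" using ve' Cons y by simp
      then have le: "\<forall>z\<in>fst ` set e'. z \<le> c'" using Cons y by force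
      have c'in: "c' \<in> fst ` set e'" using Cons y by simp
      have g: "\<forall>z\<in>fst ` set e0. c' < z" using s0(3) c'in by blast
      show ?thesis
      proof (rule set_eqI)
        fix z
        show "z \<in> {y \<in> fst ` set e. lo < y \<and> y \<le> c} \<longleftrightarrow> z \<in> insert c (fst ` set e0)"
          unfolding Cs lo using le g s0(1) c'in s0(2)
          by (metis (no_types, lifting) Un_iff insert_iff less_imp_le_nat linorder_not_le mem_Collect_eq order_less_irrefl)
      qed
    qed
    have zz0: "zz (fst ` set e) lo c = Suc (length e0)"
    proof -
      have "c \<notin> fst ` set e0" using s0(1) by blast
      moreover have "card (fst ` set e0) = length e0"
        using distinct_card[OF s04] by simp
      ultimately show ?thesis unfolding zz_def zset by simp
    qed
    have tail: "typw (rowsE e) (fst ` set e) ms' = typw (rowsE e') (fst ` set e') ms'"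
    proof (rule typw_cong)
      show "\<forall>m\<in>set ms'. kk (rowsE e) m = kk (rowsE e') m"
      proof
        fix m assume "m \<in> set ms'"
        then have "m < c" using ms'sub s0(2) by blast
        then show "kk (rowsE e) m = kk (rowsE e') m" unfolding R by (simp add: kk_block_other)
      qed
      show "\<forall>m\<in>set ms'. {y \<in> fst ` set e. y \<le> m} = {y \<in> fst ` set e'. y \<le> m}"
      proof
        fix m assume "m \<in> set ms'"
        then have m: "m \<in> fst ` set e'" using ms'sub by blast
        then have "m < c" "\<forall>z\<in>fst ` set e0. m < z" using s0(2,3) by blast+
        then show "{y \<in> fst ` set e. y \<le> m} = {y \<in> fst ` set e'. y \<le> m}"
          unfolding Cs by auto
      qed
    qed
    have IH: "typw (rowsE e') (fst ` set e') ms' = letters e'"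
      unfolding ms'_def using less.hyps[of e'] ve' hd' Cons t by simp
    have le0: "letters e0 = replicate (length e0) 0"
      using e0e unfolding letters_def by (induction e0) auto
    have "letters e = cnt bl # replicate (length e0) 0 @ letters e'"
      using Cons x t le0 by (simp add: letters_def)
    then show ?thesis unfolding ms typw_Cons lo_def[symmetric] kk0 zz0 tail IH by simp
  qed
qed

lemma mp_type_toMP: "validE e \<Longrightarrow> (e = [] \<or> snd (hd e) \<noteq> []) \<Longrightarrow> mp_type (toMP e) = letters e"
  unfolding toMP_def mp_type_typ using ms_lemma type_toMP by simp



lemma okb_filter: "lm R \<Longrightarrow> sorted_wrt (\<ge>) (map fst R) \<Longrightarrow> okb (map snd (filter (\<lambda>r. fst r = c) R))"
proof (induction R)
  case Nil
  then show ?case by (simp add: okb_def)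
next
  case (Cons x ys)
  have lm: "(ys = [] \<or> fst (hd ys) < fst x) \<longrightarrow> snd x" "lm ys" using Cons.prems(1) by auto
  have so: "\<forall>y\<in>set ys. fst y \<le> fst x" "sorted_wrt (\<ge>) (map fst ys)" using Cons.prems(2) by auto
  have IH: "okb (map snd (filter (\<lambda>r. fst r = c) ys))" using Cons.IH lm(2) so(2) by blast
  show ?case
  proof (cases "fst x = c")
    case True
    show ?thesis
    proof (cases "filter (\<lambda>r. fst r = c) ys = []")
      case e: True
      have "snd x"
      proof (cases ys)
        case (Cons y ys')
        have "fst y \<noteq> c" using e Cons by auto
        moreover have "fst y \<le> fst x" using so Cons by simp
        ultimately have "fst (hd ys) < fst x" using Cons True by simp
        then show ?thesis using lm(1) by blast
      qed (use lm(1) in simp)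
      then show ?thesis using True e by (simp add: okb_def)
    next
      case False
      then show ?thesis using True IH by (simp add: okb_def)
    qed
  next
    case False
    then show ?thesis using IH by simp
  qed
qed

lemma split_sorted: "sorted_wrt (\<ge>) (map fst R) \<Longrightarrow> \<forall>r\<in>set R. fst r \<le> (c::nat) \<Longrightarrow>
    R = filter (\<lambda>r. fst r = c) R @ filter (\<lambda>r. fst r \<noteq> c) R"
proof (induction R)
  case (Cons x ys)
  show ?case
  proof (cases "fst x = c")
    case True
    then show ?thesis using Cons by simp
  next
    case False
    then have "fst x < c" using Cons.prems by force
    then have "\<forall>y\<in>set ys. fst y < c" using Cons.prems(1) by force
    then have "filter (\<lambda>r. fst r = c) ys = []" "filter (\<lambda>r. fst r \<noteq> c) ys = ys"
      by (auto simp: filter_empty_conv filter_id_conv)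
    then show ?thesis using False by simp
  qed
qed simp

lemma concat_filter: "sorted_wrt (\<ge>) (map fst R) \<Longrightarrow> sorted_wrt (>) (cs::nat list) \<Longrightarrow> fst ` set R \<subseteq> set cs \<Longrightarrow>
   concat (map (\<lambda>c. filter (\<lambda>r. fst r = c) R) cs) = R"
proof (induction cs arbitrary: R)
  case Nil
  then show ?case by simp
next
  case (Cons c cs')
  define R2 where "R2 = filter (\<lambda>r. fst r \<noteq> c) R"
  have le: "\<forall>r\<in>set R. fst r \<le> c"
  proof
    fix r assume "r \<in> set R"
    then have "fst r \<in> set (c # cs')" using Cons.prems(3) by blast
    then show "fst r \<le> c" using Cons.prems(2) by force
  qed
  have sp: "R = filter (\<lambda>r. fst r = c) R @ R2" unfolding R2_def using split_sorted[OF Cons.prems(1) le] .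
  have m: "map (\<lambda>c'. filter (\<lambda>r. fst r = c') R) cs' = map (\<lambda>c'. filter (\<lambda>r. fst r = c') R2) cs'"
  proof (rule map_cong[OF refl])
    fix c' assume "c' \<in> set cs'"
    then have "c' \<noteq> c" using Cons.prems(2) by auto
    then show "filter (\<lambda>r. fst r = c') R = filter (\<lambda>r. fst r = c') R2"
      unfolding R2_def by (simp add: filter_filter) (metis (mono_tags, lifting) filter_cong)
  qed
  have s2: "sorted_wrt (\<ge>) (map fst R2)" unfolding R2_def
    using sorted_wrt_filter[OF Cons.prems(1)] by (simp add: filter_map comp_def)
  have sub2: "fst ` set R2 \<subseteq> set cs'" unfolding R2_def using Cons.prems(3) by auto
  have IH': "concat (map (\<lambda>c'. filter (\<lambda>r. fst r = c') R2) cs') = R2"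
    using Cons.IH[OF s2 _ sub2] Cons.prems(2) by simp
  have "concat (map (\<lambda>c'. filter (\<lambda>r. fst r = c') R) (c # cs'))
     = filter (\<lambda>r. fst r = c) R @ concat (map (\<lambda>c'. filter (\<lambda>r. fst r = c') R) cs')" by simp
  also have "\<dots> = filter (\<lambda>r. fst r = c) R @ R2" unfolding m IH' ..
  also have "\<dots> = R" using sp by simp
  finally show ?case .
qed

lemma is_mp_repr: "is_mp p \<Longrightarrow> \<exists>e. validE e \<and> (e = [] \<or> snd (hd e) \<noteq> []) \<and> toMP e = p"
proof -
  assume ip: "is_mp p"
  obtain R C where p: "p = (R, C)" by (cases p)
  have pos: "\<forall>r\<in>set R. fst r > 0" and so: "sorted_wrt (\<ge>) (map fst R)"
    and cor: "\<forall>i<length R. (Suc i = length R \<or> fst (R ! Suc i) < fst (R ! i)) \<longrightarrow> snd (R ! i)"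
    and rc: "\<forall>r\<in>set R. fst r \<in> C" and cc: "\<forall>c\<in>C. 1 \<le> c \<and> (\<exists>r\<in>set R. c \<le> fst r)"
    using ip unfolding p is_mp_def Let_def by auto
  have lmR: "lm R" using cor lm_iff by blast
  have finC: "finite C"
  proof (rule finite_subset)
    show "C \<subseteq> (\<Union>r\<in>set R. {..fst r})" using cc by auto
  qed simp
  obtain xs where xs: "sorted_wrt (<) xs" "set xs = C"
    using ex1_sorted_list_for_set_if_finite[OF finC] by blast
  define cs where "cs = rev xs"
  have cs: "sorted_wrt (>) cs" "set cs = C" unfolding cs_def using xs by (simp_all add: sorted_wrt_rev)
  define e where "e = map (\<lambda>c. (c, map snd (filter (\<lambda>r. fst r = c) R))) cs"
  have mfe: "map fst e = cs" unfolding e_def by (simp add: comp_def)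
  have ve: "validE e" unfolding validE_def
  proof
    show "sorted_wrt (>) (map fst e)" using mfe cs by simp
    show "\<forall>x\<in>set e. 1 \<le> fst x \<and> okb (snd x)"
      unfolding e_def using cs(2) cc okb_filter[OF lmR so] by auto
  qed
  have fl: "map (\<lambda>r. (c, snd r)) (filter (\<lambda>r. fst r = c) R) = filter (\<lambda>r. fst r = c) R" for c
    by (rule map_idI) auto
  have "rowsE e = concat (map (\<lambda>c. filter (\<lambda>r. fst r = c) R) cs)"
    unfolding e_def rowsE_def by (simp add: comp_def fl)
  also have "\<dots> = R" using concat_filter[OF so cs(1)] rc cs(2) by blast
  finally have rows: "rowsE e = R" .
  have cols: "fst ` set e = C" using mfe cs(2) by (metis set_map)
  have hd: "e = [] \<or> snd (hd e) \<noteq> []"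
  proof (cases cs)
    case Nil
    then show ?thesis unfolding e_def by simp
  next
    case (Cons c0 cs')
    have c0: "c0 \<in> C" using cs(2) Cons by auto
    then obtain r where r: "r \<in> set R" "c0 \<le> fst r" using cc by blast
    have "fst r \<in> set cs" using rc r(1) cs(2) by blast
    then have "fst r \<le> c0" using cs(1) Cons by force
    then have "fst r = c0" using r(2) by simp
    then have "filter (\<lambda>r. fst r = c0) R \<noteq> []" using r(1) by (auto simp: filter_empty_conv)
    then show ?thesis unfolding e_def using Cons by simp
  qed
  show ?thesis using ve hd rows cols p by (intro exI[of _ e]) (simp add: toMP_def)
qed

lemma hd_circ: "validE e \<Longrightarrow> circ_word (letters e) \<Longrightarrow> e = [] \<or> snd (hd e) \<noteq> []"
  by (cases e) (auto simp: circ_word_def)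

lemma MP_eq: "circ_word W \<Longrightarrow> MP W = toMP ` {e. validE e \<and> letters e = W}"
proof (rule set_eqI)
  fix p assume W: "circ_word W"
  show "p \<in> MP W \<longleftrightarrow> p \<in> toMP ` {e. validE e \<and> letters e = W}"
  proof
    assume "p \<in> MP W"
    then have ip: "is_mp p" "mp_type p = W" by (auto simp: MP_def)
    obtain e where e: "validE e" "e = [] \<or> snd (hd e) \<noteq> []" "toMP e = p" using is_mp_repr[OF ip(1)] by blast
    have "letters e = W" using mp_type_toMP[OF e(1,2)] e(3) ip(2) by simp
    then show "p \<in> toMP ` {e. validE e \<and> letters e = W}" using e by blast
  next
    assume "p \<in> toMP ` {e. validE e \<and> letters e = W}"
    then obtain e where e: "validE e" "letters e = W" "p = toMP e" by blast
    have h: "e = [] \<or> snd (hd e) \<noteq> []" using hd_circ e W by blast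
    show "p \<in> MP W" unfolding MP_def using is_mp_toMP[OF e(1) h] mp_type_toMP[OF e(1) h] e by simp
  qed
qed

theorem theorem1p9:
  fixes W1 W2 W :: word and p :: mpart
  assumes "circ_word W1" and "circ_word W2" and "circ_word W"
    and "p \<in> MP W"
  shows "mp_coeff W1 W2 p = stuffle_coeff W1 W2 W"
proof -
  obtain e where e: "validE e" "letters e = W" "p = toMP e"
    using assms(4) MP_eq[OF assms(3)] by blast
  define f where "f = (\<lambda>(e1::ev list, e2::ev list). (toMP e1, toMP e2))"
  have S: "{(p1, p2). p1 \<in> MP W1 \<and> p2 \<in> MP W2 \<and> Phi p1 p2 = p} = f ` T W1 W2 e"
  proof (rule pair_set_eqI)
    fix p1 p2
    show "(p1, p2) \<in> {(p1, p2). p1 \<in> MP W1 \<and> p2 \<in> MP W2 \<and> Phi p1 p2 = p} \<longleftrightarrow> (p1, p2) \<in> f ` T W1 W2 e"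
    proof
      assume "(p1, p2) \<in> {(p1, p2). p1 \<in> MP W1 \<and> p2 \<in> MP W2 \<and> Phi p1 p2 = p}"
      then have m: "p1 \<in> MP W1" "p2 \<in> MP W2" "Phi p1 p2 = p" by auto
      obtain e1 where e1: "validE e1" "letters e1 = W1" "p1 = toMP e1"
        using m(1) MP_eq[OF assms(1)] by blast
      obtain e2 where e2: "validE e2" "letters e2 = W2" "p2 = toMP e2"
        using m(2) MP_eq[OF assms(2)] by blast
      have "toMP (mergeE e1 e2) = toMP e"
        using Phi_toMP[OF e1(1) e2(1)] assms(1,2) e1 e2 m(3) e(3) by simp
      then have "mergeE e1 e2 = e" using toMP_inj mergeE_valid e1(1) e2(1) e(1) by blast
      then have "(e1, e2) \<in> T W1 W2 e" using e1 e2 by (simp add: T_mem)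
      then show "(p1, p2) \<in> f ` T W1 W2 e" unfolding f_def using e1(3) e2(3)
        by (intro image_eqI[where x="(e1,e2)"]) simp_all
    next
      assume "(p1, p2) \<in> f ` T W1 W2 e"
      then obtain q where q: "q \<in> T W1 W2 e" "(p1,p2) = f q" by blast
      obtain e1 e2 where q': "q = (e1, e2)" by (cases q)
      have t: "validE e1" "validE e2" "letters e1 = W1" "letters e2 = W2" "mergeE e1 e2 = e"
        using q(1) q' by (simp_all add: T_mem)
      have pp: "p1 = toMP e1" "p2 = toMP e2" using q(2) q' unfolding f_def by simp_all
      have "p1 \<in> MP W1" "p2 \<in> MP W2" using MP_eq[OF assms(1)] MP_eq[OF assms(2)] t pp by blast+
      moreover have "Phi p1 p2 = p" using Phi_toMP[OF t(1,2)] assms(1,2) t pp e(3) by simp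
      ultimately show "(p1, p2) \<in> {(p1, p2). p1 \<in> MP W1 \<and> p2 \<in> MP W2 \<and> Phi p1 p2 = p}" by simp
    qed
  qed
  have inj: "inj_on f (T W1 W2 e)"
  proof (rule inj_onI)
    fix q q' assume q: "q \<in> T W1 W2 e" "q' \<in> T W1 W2 e" "f q = f q'"
    obtain a b where ab: "q = (a,b)" by (cases q)
    obtain a' b' where ab': "q' = (a',b')" by (cases q')
    have "validE a" "validE b" "validE a'" "validE b'" using q(1,2) ab ab' by (simp_all add: T_mem)
    moreover have "toMP a = toMP a'" "toMP b = toMP b'" using q(3) ab ab' unfolding f_def by simp_all
    ultimately show "q = q'" using ab ab' toMP_inj by blast
  qed
  have "mp_coeff W1 W2 p = card (T W1 W2 e)"
    unfolding mp_coeff_def S using card_image[OF inj] by simp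
  also have "\<dots> = count (stuffle W1 W2) (letters e)" using main_count[OF e(1)] by blast
  finally show ?thesis unfolding stuffle_coeff_def e(2) .
qed


end
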